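(* Let $c>0$, let $\beta>0,\delta>0$, and let $G$ be a $c$-Ramsey graph on $n$ vertices together with a set $S\subseteq V(G)$, $|S|\ge n^{3/4}$, such that for all $A,B\subseteq S$ with $|A|,|B|\ge |S|^{1-\beta}$ we have $\delta\le d(A,B)\le 1-\delta$. Let $m=|S|$. Let $r\ge1$ and $X,Y_1,\dots,Y_r\subseteq S$ with $|X|\ge r\,m^{1-\beta}$ and $|Y_1|,\dots,|Y_r|\ge m^{1-\beta}$. Then there exists $v\in X$ such that $d(v,Y_i)\ge\delta$ for every $i=1,\dots,r$.
   Context: Logarithms base 2; $G$ is $c$-Ramsey if no set of $c\log n$ vertices is a clique or independent set. For $A,B\subseteq V(G)$, $d(A,B)=e(A,B)/(|A||B|)$ where $e(A,B)$ is the number of edges of $G$ with one endpoint in $A$ and the other in $B$; $d(v,B)$ means $d(\{v\},B)$. *)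

theory Defs
  imports Complex_Main
begin

definition simple_graph :: "'a set \<Rightarrow> ('a \<Rightarrow> 'a \<Rightarrow> bool) \<Rightarrow> bool" where
  "simple_graph V E \<longleftrightarrow> finite V \<and> (\<forall>u v. E u v \<longrightarrow> u \<in> V \<and> v \<in> V)
     \<and> (\<forall>u v. E u v \<longrightarrow> E v u) \<and> (\<forall>v. \<not> E v v)"

definition is_clique :: "('a \<Rightarrow> 'a \<Rightarrow> bool) \<Rightarrow> 'a set \<Rightarrow> bool" where
  "is_clique E U \<longleftrightarrow> (\<forall>u\<in>U. \<forall>v\<in>U. u \<noteq> v \<longrightarrow> E u v)"

definition is_indep :: "('a \<Rightarrow> 'a \<Rightarrow> bool) \<Rightarrow> 'a set \<Rightarrow> bool" where
  "is_indep E U \<longleftrightarrow> (\<forall>u\<in>U. \<forall>v\<in>U. \<not> E u v)"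

definition ramsey_graph :: "real \<Rightarrow> 'a set \<Rightarrow> ('a \<Rightarrow> 'a \<Rightarrow> bool) \<Rightarrow> bool" where
  "ramsey_graph c V E \<longleftrightarrow> (\<forall>U \<subseteq> V. real (card U) \<ge> c * log 2 (real (card V))
       \<longrightarrow> \<not> is_clique E U \<and> \<not> is_indep E U)"

definition e_count :: "('a \<Rightarrow> 'a \<Rightarrow> bool) \<Rightarrow> 'a set \<Rightarrow> 'a set \<Rightarrow> nat" where
  "e_count E A B = card {(a, b). a \<in> A \<and> b \<in> B \<and> E a b}"

definition density :: "('a \<Rightarrow> 'a \<Rightarrow> bool) \<Rightarrow> 'a set \<Rightarrow> 'a set \<Rightarrow> real" where
  "density E A B = real (e_count E A B) / (real (card A) * real (card B))"

end

theory Submission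
  imports Defs
begin

lemma e_count_Sigma:
  "e_count E A B = card (Sigma A (\<lambda>a. {b\<in>B. E a b}))"
  unfolding e_count_def by (rule arg_cong[where f=card]) auto

lemma e_count_sum:
  assumes "finite A" "finite B"
  shows "real (e_count E A B) = (\<Sum>a\<in>A. real (card {b\<in>B. E a b}))"
  unfolding e_count_Sigma using assms by (simp add: card_SigmaI)

lemma density_single:
  "density E {v} B = real (card {b\<in>B. E v b}) / real (card B)"
  unfolding density_def e_count_Sigma
  by (cases "finite B") (simp_all add: card_SigmaI)

lemma bad_small:
  fixes \<delta> t :: real
  assumes fin: "finite Bs" "finite Y" and Ypos: "card Y > 0"
    and bad: "\<forall>v\<in>Bs. density E {v} Y < \<delta>"
    and big: "card Bs > 0"
  shows "density E Bs Y < \<delta>"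
proof -
  have "\<forall>v\<in>Bs. real (card {b\<in>Y. E v b}) < \<delta> * real (card Y)"
    using bad Ypos by (auto simp: density_single divide_less_eq)
  hence "(\<Sum>a\<in>Bs. real (card {b\<in>Y. E a b})) < (\<Sum>a\<in>Bs. \<delta> * real (card Y))"
    using big fin by (intro sum_strict_mono) (auto simp: card_gt_0_iff)
  hence "real (e_count E Bs Y) < \<delta> * real (card Y) * real (card Bs)"
    using e_count_sum[OF fin, of E] by (simp add: mult_ac)
  thus ?thesis unfolding density_def using Ypos big
    by (simp add: divide_less_eq mult_ac)
qed

theorem mainTheorem7:
  fixes c \<beta> \<delta> :: real and V S X :: "'a set" and E :: "'a \<Rightarrow> 'a \<Rightarrow> bool"
    and r :: nat and Y :: "nat \<Rightarrow> 'a set"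
  assumes "c > 0" and "\<beta> > 0" and "\<delta> > 0"
    and "simple_graph V E" and "ramsey_graph c V E"
    and "S \<subseteq> V" and "real (card S) \<ge> real (card V) powr (3/4)"
    and "\<forall>A B. A \<subseteq> S \<and> B \<subseteq> S \<and> real (card A) \<ge> real (card S) powr (1 - \<beta>)
               \<and> real (card B) \<ge> real (card S) powr (1 - \<beta>)
               \<longrightarrow> \<delta> \<le> density E A B \<and> density E A B \<le> 1 - \<delta>"
    and "r \<ge> 1"
    and "X \<subseteq> S" and "\<forall>i\<in>{1..r}. Y i \<subseteq> S"
    and "real (card X) \<ge> real r * real (card S) powr (1 - \<beta>)"
    and "\<forall>i\<in>{1..r}. real (card (Y i)) \<ge> real (card S) powr (1 - \<beta>)"
  shows "\<exists>v\<in>X. \<forall>i\<in>{1..r}. density E {v} (Y i) \<ge> \<delta>"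
proof -
  have finV: "finite V" using assms(4) by (simp add: simple_graph_def)
  have finS: "finite S" using finV assms(6) finite_subset by blast
  have finX: "finite X" using finS assms(10) finite_subset by blast
  have V2: "card V \<ge> 2"
  proof (rule ccontr)
    assume "\<not> card V \<ge> 2"
    hence "card V = 0 \<or> card V = 1" by auto
    hence "log 2 (real (card V)) = 0" by (auto simp: log_def)
    hence "\<not> is_clique E {}" using assms(5) unfolding ramsey_graph_def by auto
    thus False by (simp add: is_clique_def)
  qed
  have "real (card V) powr (3/4) > 0" using V2 by simp
  hence Spos: "card S > 0" using assms(7) by linarith
  define t where "t = real (card S) powr (1 - \<beta>)"
  have tpos: "t > 0" unfolding t_def using Spos by simp
  define Bd where "Bd i = {v\<in>X. density E {v} (Y i) < \<delta>}" for i
  have small: "real (card (Bd i)) < t" if i: "i \<in> {1..r}" for i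
  proof (rule ccontr)
    assume "\<not> real (card (Bd i)) < t"
    hence ge: "real (card (Bd i)) \<ge> t" by simp
    have BS: "Bd i \<subseteq> S" using assms(10) by (auto simp: Bd_def)
    have YS: "Y i \<subseteq> S" using assms(11) i by auto
    have Yt: "real (card (Y i)) \<ge> t" using assms(13) i t_def by auto
    have "\<delta> \<le> density E (Bd i) (Y i)" using assms(8) BS YS ge Yt t_def by blast
    moreover have "density E (Bd i) (Y i) < \<delta>"
      apply (rule bad_small)
      using finX finS YS finite_subset Yt tpos ge by (auto simp: Bd_def)
    ultimately show False by simp
  qed
  have "real (card (\<Union>i\<in>{1..r}. Bd i)) \<le> real (\<Sum>i\<in>{1..r}. card (Bd i))"
    using card_UN_le[of "{1..r}" Bd] by (simp only: of_nat_le_iff finite_atLeastAtMost)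
  also have "\<dots> = (\<Sum>i\<in>{1..r}. real (card (Bd i)))" by simp
  also have "\<dots> < (\<Sum>i\<in>{1..r}. t)"
    using small assms(9) by (intro sum_strict_mono) auto
  also have "\<dots> = real r * t" by simp
  also have "\<dots> \<le> real (card X)" using assms(12) t_def by simp
  finally have "card (\<Union>i\<in>{1..r}. Bd i) < card X" by simp
  hence "\<not> X \<subseteq> (\<Union>i\<in>{1..r}. Bd i)" using finX card_mono
    by (metis (no_types, lifting) finite_UN_I finite_atLeastAtMost Bd_def finite_subset
        mem_Collect_eq subsetI leD)
  then obtain v where "v \<in> X" "v \<notin> (\<Union>i\<in>{1..r}. Bd i)" by blast
  thus ?thesis by (auto simp: Bd_def not_less)
qed

end
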